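(* Let $\mathcal{S}=(P,N)$ be a sample with $P\neq\emptyset$, and let $\varphi$ be an LTL formula in negation normal form such that for every $M\in P$ and every state $s$ of $M$, $\mathrm{Pr}^{M}(s\models\varphi)=0$. Consider PLTL formulas of the form $\mathbf{P}_{>r}[\psi]$ with $r\in[0,1]$ and $\psi$ an LTL formula in negation normal form. If $\mathbf{P}_{>r}[\psi]$ is consistent with $\mathcal{S}$ and has minimal size among all consistent formulas of this form, then $\varphi$ is not a subformula of $\psi$.
   Context: A DTMC is a tuple $M=(S,s_I,P,\mathrm{AP},\ell)$ with finite state set $S$, initial state $s_I$, transition probabilities $P:S\times S\to[0,1]$, atomic propositions $\mathrm{AP}$ and labelling $\ell:S\to2^{\mathrm{AP}}$; $\mathrm{Pr}^M_s$ is the standard probability measure on infinite paths from $s$, and $\mathrm{Pr}^M(s\models\varphi)$ is the probability of the set of paths from $s$ satisfying the LTL formula $\varphi$. LTL formulas in negation normal form (NNF) are built from literals $p,\neg p$ ($p\in\mathrm{AP}$) using $\land,\lor,\mathbf{X},\mathbf{F},\mathbf{G},\mathbf{U}$ (negation only applied to atomic propositions), with the standard path semantics ($\mathbf{F}\varphi=\mathrm{true}\,\mathbf{U}\,\varphi$, $\mathbf{G}\varphi=\neg\mathbf{F}\neg\varphi$). The size of a formula is the number of occurrences of operators in $\{\mathbf{F},\mathbf{X},\mathbf{G},\mathbf{U},\land,\lor\}$ plus the number of occurrences of literals; the size of $\mathbf{P}_{>r}[\psi]$ is the size of $\psi$. A state $s$ satisfies $\mathbf{P}_{>r}[\psi]$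 iff $\mathrm{Pr}^M(s\models\psi)>r$, and a DTMC satisfies it iff its initial state does. A sample $\mathcal{S}=(P,N)$ consists of finite sets $P$ (positive) and $N$ (negative) of DTMCs over the same $\mathrm{AP}$; a formula is consistent with $\mathcal{S}$ if all DTMCs in $P$ satisfy it and no DTMC in $N$ satisfies it. *)

theory Defs
  imports "HOL-Probability.Probability"
begin

record ('s, 'p) dtmc =
  dtmc_states :: "'s set"
  dtmc_init   :: 's
  dtmc_P      :: "'s \<Rightarrow> 's \<Rightarrow> real"
  dtmc_label  :: "'s \<Rightarrow> 'p set"

definition wf_dtmc :: "'p set \<Rightarrow> ('s, 'p) dtmc \<Rightarrow> bool" where
  "wf_dtmc AP M \<longleftrightarrow>
     finite (dtmc_states M) \<and> dtmc_init M \<in> dtmc_states M \<and>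
     (\<forall>s t. 0 \<le> dtmc_P M s t \<and> dtmc_P M s t \<le> 1) \<and>
     (\<forall>s\<in>dtmc_states M. \<forall>t. t \<notin> dtmc_states M \<longrightarrow> dtmc_P M s t = 0) \<and>
     (\<forall>s\<in>dtmc_states M. (\<Sum>t\<in>dtmc_states M. dtmc_P M s t) = 1) \<and>
     (\<forall>s\<in>dtmc_states M. dtmc_label M s \<subseteq> AP)"

fun path_prob :: "('s, 'p) dtmc \<Rightarrow> 's \<Rightarrow> 's list \<Rightarrow> real" where
  "path_prob M s [] = 1"
| "path_prob M s (t # ts) = dtmc_P M s t * path_prob M t ts"

definition paths :: "('s, 'p) dtmc \<Rightarrow> 's \<Rightarrow> 's stream measure" where
  "paths M s = (THE \<mu>.
      sets \<mu> = sets (stream_space (count_space (dtmc_states M))) \<and>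
      prob_space \<mu> \<and>
      (\<forall>ts. set ts \<subseteq> dtmc_states M \<longrightarrow>
         emeasure \<mu> {\<omega> \<in> streams (dtmc_states M). stake (Suc (length ts)) \<omega> = s # ts}
           = ennreal (path_prob M s ts)))"

datatype 'p ltl =
    Lit 'p
  | NLit 'p
  | And "'p ltl" "'p ltl"
  | Or "'p ltl" "'p ltl"
  | Next "'p ltl"
  | Eventually "'p ltl"
  | Always "'p ltl"
  | Until "'p ltl" "'p ltl"

fun ltl_sat :: "('s \<Rightarrow> 'p set) \<Rightarrow> 's stream \<Rightarrow> 'p ltl \<Rightarrow> bool" where
  "ltl_sat l w (Lit p) \<longleftrightarrow> p \<in> l (shd w)"
| "ltl_sat l w (NLit p) \<longleftrightarrow> p \<notin> l (shd w)"
| "ltl_sat l w (And \<phi> \<psi>) \<longleftrightarrow> ltl_sat l w \<phi> \<and> ltl_sat l w \<psi>"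
| "ltl_sat l w (Or \<phi> \<psi>) \<longleftrightarrow> ltl_sat l w \<phi> \<or> ltl_sat l w \<psi>"
| "ltl_sat l w (Next \<phi>) \<longleftrightarrow> ltl_sat l (stl w) \<phi>"
| "ltl_sat l w (Eventually \<phi>) \<longleftrightarrow> (\<exists>i. ltl_sat l (sdrop i w) \<phi>)"
| "ltl_sat l w (Always \<phi>) \<longleftrightarrow> (\<forall>i. ltl_sat l (sdrop i w) \<phi>)"
| "ltl_sat l w (Until \<phi> \<psi>) \<longleftrightarrow>
     (\<exists>i. ltl_sat l (sdrop i w) \<psi> \<and> (\<forall>j<i. ltl_sat l (sdrop j w) \<phi>))"

fun ltl_size :: "'p ltl \<Rightarrow> nat" where
  "ltl_size (Lit p) = 1"
| "ltl_size (NLit p) = 1"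
| "ltl_size (And \<phi> \<psi>) = 1 + ltl_size \<phi> + ltl_size \<psi>"
| "ltl_size (Or \<phi> \<psi>) = 1 + ltl_size \<phi> + ltl_size \<psi>"
| "ltl_size (Next \<phi>) = 1 + ltl_size \<phi>"
| "ltl_size (Eventually \<phi>) = 1 + ltl_size \<phi>"
| "ltl_size (Always \<phi>) = 1 + ltl_size \<phi>"
| "ltl_size (Until \<phi> \<psi>) = 1 + ltl_size \<phi> + ltl_size \<psi>"

fun atoms :: "'p ltl \<Rightarrow> 'p set" where
  "atoms (Lit p) = {p}"
| "atoms (NLit p) = {p}"
| "atoms (And \<phi> \<psi>) = atoms \<phi> \<union> atoms \<psi>"
| "atoms (Or \<phi> \<psi>) = atoms \<phi> \<union> atoms \<psi>"
| "atoms (Next \<phi>) = atoms \<phi>"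
| "atoms (Eventually \<phi>) = atoms \<phi>"
| "atoms (Always \<phi>) = atoms \<phi>"
| "atoms (Until \<phi> \<psi>) = atoms \<phi> \<union> atoms \<psi>"

fun subformulas :: "'p ltl \<Rightarrow> 'p ltl set" where
  "subformulas (Lit p) = {Lit p}"
| "subformulas (NLit p) = {NLit p}"
| "subformulas (And \<phi> \<psi>) = insert (And \<phi> \<psi>) (subformulas \<phi> \<union> subformulas \<psi>)"
| "subformulas (Or \<phi> \<psi>) = insert (Or \<phi> \<psi>) (subformulas \<phi> \<union> subformulas \<psi>)"
| "subformulas (Next \<phi>) = insert (Next \<phi>) (subformulas \<phi>)"
| "subformulas (Eventually \<phi>) = insert (Eventually \<phi>) (subformulas \<phi>)"
| "subformulas (Always \<phi>) = insert (Always \<phi>) (subformulas \<phi>)"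
| "subformulas (Until \<phi> \<psi>) = insert (Until \<phi> \<psi>) (subformulas \<phi> \<union> subformulas \<psi>)"

definition Pr :: "('s, 'p) dtmc \<Rightarrow> 's \<Rightarrow> 'p ltl \<Rightarrow> real" where
  "Pr M s \<phi> = measure (paths M s) {\<omega> \<in> space (paths M s). ltl_sat (dtmc_label M) \<omega> \<phi>}"

definition sat_PLTL :: "('s, 'p) dtmc \<Rightarrow> real \<Rightarrow> 'p ltl \<Rightarrow> bool" where
  "sat_PLTL M r \<psi> \<longleftrightarrow> Pr M (dtmc_init M) \<psi> > r"

definition sample :: "'p set \<Rightarrow> ('s, 'p) dtmc set \<Rightarrow> ('s, 'p) dtmc set \<Rightarrow> bool" where
  "sample AP Pos Neg \<longleftrightarrow> finite Pos \<and> finite Neg \<and> (\<forall>M \<in> Pos \<union> Neg. wf_dtmc AP M)"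

definition consistent :: "('s, 'p) dtmc set \<Rightarrow> ('s, 'p) dtmc set \<Rightarrow> real \<Rightarrow> 'p ltl \<Rightarrow> bool" where
  "consistent Pos Neg r \<psi> \<longleftrightarrow> (\<forall>M\<in>Pos. sat_PLTL M r \<psi>) \<and> (\<forall>M\<in>Neg. \<not> sat_PLTL M r \<psi>)"

end

theory Submission
  imports Defs
begin

primcorec orb :: "('s \<Rightarrow> 's) \<Rightarrow> 's \<Rightarrow> ('s \<Rightarrow> 's) stream \<Rightarrow> 's stream" where
  "orb c s \<omega> = s ## orb c (c (shd \<omega> s)) (stl \<omega>)"

lemma orb_Stream: "orb c s (f ## \<omega>) = s ## orb c (c (f s)) \<omega>"
  by (subst orb.code) simp

lemma orb_in_streams:
  assumes "s \<in> S" "\<And>x. c x \<in> S"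
  shows "orb c s \<omega> \<in> streams S"
proof -
  have "\<forall>s \<omega>. s \<in> S \<longrightarrow> (\<forall>n. orb c s \<omega> !! n \<in> S)"
  proof (intro allI impI)
    fix n show "\<And>s \<omega>. s \<in> S \<Longrightarrow> orb c s \<omega> !! n \<in> S"
      by (induction n) (auto simp: assms(2))
  qed
  then show ?thesis using assms by (auto simp: streams_iff_snth)
qed

lemma stl_sdrop': "stl (sdrop k \<omega>) = sdrop (Suc k) \<omega>"
  by (induction k arbitrary: \<omega>) auto

lemma measurable_orb:
  fixes N :: "'s pmf"
  assumes S: "finite S" and c: "\<And>x. c x \<in> S"
    and h: "h \<in> measurable (stream_space (measure_pmf N')) (count_space S)"
  shows "(\<lambda>\<omega>. orb c (h \<omega>) (sdrop k \<omega>)) \<in> measurable (stream_space (measure_pmf N')) (stream_space (count_space S))"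
proof -
  define P where "P = (\<lambda>g. \<exists>h k. h \<in> measurable (stream_space (measure_pmf N')) (count_space S) \<and>
      g = (\<lambda>\<omega>. orb c (h \<omega>) (sdrop k \<omega>)))"
  have "P (\<lambda>\<omega>. orb c (h \<omega>) (sdrop k \<omega>))" using h unfolding P_def by blast
  then show ?thesis
  proof (rule measurable_stream_coinduct[of P])
    fix g assume "P g"
    then show "(\<lambda>x. shd (g x)) \<in> measurable (stream_space (measure_pmf N')) (count_space S)" unfolding P_def by auto
  next
    fix g assume "P g"
    then obtain h k where h: "h \<in> measurable (stream_space (measure_pmf N')) (count_space S)"
      and g: "g = (\<lambda>\<omega>. orb c (h \<omega>) (sdrop k \<omega>))" unfolding P_def by blast
    have "(\<lambda>\<omega>. (\<lambda>u \<omega>. c (shd (sdrop k \<omega>) u)) (h \<omega>) \<omega>) \<in> measurable (stream_space (measure_pmf N')) (count_space S)"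
    proof (rule measurable_compose_countable'[OF _ h])
      fix u
      have "(\<lambda>\<omega>. shd (sdrop k \<omega>)) \<in> measurable (stream_space (measure_pmf N')) (measure_pmf N')"
        by measurable
      moreover have "(\<lambda>f. c (f u)) \<in> measurable (measure_pmf N') (count_space S)"
        using c by simp
      ultimately show "(\<lambda>\<omega>. c (shd (sdrop k \<omega>) u)) \<in> measurable (stream_space (measure_pmf N')) (count_space S)"
        by (rule measurable_compose)
    qed (use S in \<open>auto intro: countable_finite\<close>)
    note hm = this
    have eq: "(\<lambda>x. stl (g x)) = (\<lambda>\<omega>. orb c (c (shd (sdrop k \<omega>) (h \<omega>))) (sdrop (Suc k) \<omega>))"
      unfolding g by (simp only: orb.sel stl_sdrop')
    show "P (\<lambda>x. stl (g x))" unfolding P_def using hm eq by blast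
  qed
qed

lemma measurable_ltl[measurable]:
  "Measurable.pred (stream_space (count_space S)) (\<lambda>\<omega>. ltl_sat l \<omega> \<phi>)"
proof (induction \<phi>)
  case (Lit p)
  have "(\<lambda>x. p \<in> l x) \<in> measurable (count_space S) (count_space UNIV)" by simp
  from measurable_compose[OF measurable_shd this] show ?case by simp
next
  case (NLit p)
  have "(\<lambda>x. p \<notin> l x) \<in> measurable (count_space S) (count_space UNIV)" by simp
  from measurable_compose[OF measurable_shd this] show ?case by simp
next
  case (And \<phi>1 \<phi>2) note [measurable] = And.IH show ?case by simp
next
  case (Or \<phi>1 \<phi>2) note [measurable] = Or.IH show ?case by simp
next
  case (Next \<phi>) note [measurable] = Next.IH show ?case by simp
next
  case (Eventually \<phi>) note [measurable] = Eventually.IH show ?case by simp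
next
  case (Always \<phi>) note [measurable] = Always.IH show ?case by simp
next
  case (Until \<phi>1 \<phi>2)
  have A: "Measurable.pred (stream_space (count_space S)) (\<lambda>\<omega>. ltl_sat l (sdrop i \<omega>) \<phi>2)" for i
    using measurable_compose[OF measurable_sdrop Until.IH(2)] by simp
  have B0: "Measurable.pred (stream_space (count_space S)) (\<lambda>\<omega>. ltl_sat l (sdrop j \<omega>) \<phi>1)" for j
    using measurable_compose[OF measurable_sdrop Until.IH(1)] by simp
  have B: "Measurable.pred (stream_space (count_space S)) (\<lambda>\<omega>. \<forall>j\<in>{..<i}. ltl_sat l (sdrop j \<omega>) \<phi>1)" for i
    by (rule pred_intros_finite(3)) (auto intro: B0)
  have "Measurable.pred (stream_space (count_space S)) (\<lambda>\<omega>. \<exists>i. ltl_sat l (sdrop i \<omega>) \<phi>2 \<and> (\<forall>j\<in>{..<i}. ltl_sat l (sdrop j \<omega>) \<phi>1))"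
    by (intro pred_intros_countable(2) pred_intros_logic(3) A B)
  then show ?case by (simp only: ltl_sat.simps Ball_def lessThan_iff)
qed

definition cl :: "('s,'p) dtmc \<Rightarrow> 's \<Rightarrow> 's" where
  "cl M x = (if x \<in> dtmc_states M then x else dtmc_init M)"

definition rowf :: "('s,'p) dtmc \<Rightarrow> 's \<Rightarrow> 's \<Rightarrow> real" where
  "rowf M s t = (if t \<in> dtmc_states M then dtmc_P M s t else 0)"

definition row :: "('s,'p) dtmc \<Rightarrow> 's \<Rightarrow> 's pmf" where
  "row M s = (if s \<in> dtmc_states M then embed_pmf (rowf M s) else return_pmf (dtmc_init M))"

definition FF :: "('s,'p) dtmc \<Rightarrow> ('s \<Rightarrow> 's) pmf" where
  "FF M = Pi_pmf (dtmc_states M) (dtmc_init M) (row M)"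

definition Om :: "('s,'p) dtmc \<Rightarrow> ('s \<Rightarrow> 's) stream measure" where
  "Om M = stream_space (measure_pmf (FF M))"

definition DD :: "('s,'p) dtmc \<Rightarrow> 's \<Rightarrow> 's stream measure" where
  "DD M s = distr (Om M) (stream_space (count_space (dtmc_states M))) (orb (cl M) s)"

definition CC :: "('s,'p) dtmc \<Rightarrow> 's \<Rightarrow> 's list \<Rightarrow> 's stream set" where
  "CC M x ts = {\<omega> \<in> streams (dtmc_states M). stake (Suc (length ts)) \<omega> = x # ts}"

lemma space_Om[simp]: "space (Om M) = UNIV"
  by (simp add: Om_def space_stream_space)

lemma prob_Om: "prob_space (Om M)"
  unfolding Om_def by (rule prob_space.prob_space_stream_space[OF prob_space_measure_pmf])

lemma cl_in: "wf_dtmc AP M \<Longrightarrow> cl M x \<in> dtmc_states M"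
  by (simp add: cl_def wf_dtmc_def)

lemma pmf_row:
  assumes wf: "wf_dtmc AP M" and s: "s \<in> dtmc_states M"
  shows "pmf (row M s) t = rowf M s t"
proof -
  have nn: "0 \<le> rowf M s t" for t using wf by (simp add: rowf_def wf_dtmc_def)
  have fin: "finite (dtmc_states M)" using wf by (simp add: wf_dtmc_def)
  have "(\<integral>\<^sup>+x. ennreal (rowf M s x) \<partial>count_space UNIV) = (\<Sum>x\<in>dtmc_states M. ennreal (rowf M s x))"
    by (rule nn_integral_count_space'[OF fin]) (auto simp: rowf_def)
  also have "\<dots> = ennreal (\<Sum>x\<in>dtmc_states M. rowf M s x)" using nn by simp
  also have "(\<Sum>x\<in>dtmc_states M. rowf M s x) = 1"
    using wf s by (simp add: rowf_def wf_dtmc_def)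
  finally show ?thesis using s nn by (simp add: row_def pmf_embed_pmf)
qed

lemma set_row:
  assumes wf: "wf_dtmc AP M"
  shows "set_pmf (row M s) \<subseteq> dtmc_states M"
proof
  fix t assume t: "t \<in> set_pmf (row M s)"
  show "t \<in> dtmc_states M"
  proof (cases "s \<in> dtmc_states M")
    case True
    with t pmf_row[OF wf True, of t] show ?thesis
      by (auto simp: set_pmf_eq rowf_def split: if_splits)
  next
    case False
    with t wf show ?thesis by (auto simp: row_def wf_dtmc_def)
  qed
qed

lemma marg:
  assumes wf: "wf_dtmc AP M" and s: "s \<in> dtmc_states M"
  shows "map_pmf (\<lambda>f. cl M (f s)) (FF M) = row M s"
proof -
  have fin: "finite (dtmc_states M)" using wf by (simp add: wf_dtmc_def)
  have "map_pmf (\<lambda>f. cl M (f s)) (FF M) = map_pmf (cl M) (map_pmf (\<lambda>f. f s) (FF M))"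
    by (simp add: map_pmf_comp)
  also have "map_pmf (\<lambda>f. f s) (FF M) = row M s"
    using Pi_pmf_component[OF fin, of s "dtmc_init M" "row M"] s by (simp add: FF_def)
  also have "map_pmf (cl M) (row M s) = row M s"
    by (rule map_pmf_idI) (use set_row[OF wf] in \<open>auto simp: cl_def\<close>)
  finally show ?thesis .
qed

lemma emeasure_FF:
  assumes wf: "wf_dtmc AP M" and s: "s \<in> dtmc_states M" and t: "t \<in> dtmc_states M"
  shows "emeasure (measure_pmf (FF M)) {f. cl M (f s) = t} = ennreal (dtmc_P M s t)"
proof -
  have "emeasure (measure_pmf (FF M)) {f. cl M (f s) = t} = emeasure (measure_pmf (map_pmf (\<lambda>f. cl M (f s)) (FF M))) {t}"
    by (simp add: vimage_def)
  also have "\<dots> = ennreal (dtmc_P M s t)"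
    using marg[OF wf s] pmf_row[OF wf s, of t] t by (simp add: emeasure_pmf_single rowf_def)
  finally show ?thesis .
qed

lemma meas_orb:
  assumes wf: "wf_dtmc AP M" and u: "u \<in> dtmc_states M"
  shows "orb (cl M) u \<in> measurable (Om M) (stream_space (count_space (dtmc_states M)))"
proof -
  have fin: "finite (dtmc_states M)" using wf by (simp add: wf_dtmc_def)
  have "(\<lambda>\<omega>. orb (cl M) ((\<lambda>_. u) \<omega>) (sdrop 0 \<omega>)) \<in> measurable (Om M) (stream_space (count_space (dtmc_states M)))"
    unfolding Om_def by (rule measurable_orb[OF fin cl_in[OF wf]]) (use u in simp)
  then show ?thesis by simp
qed

lemma sets_DD[simp]: "sets (DD M s) = sets (stream_space (count_space (dtmc_states M)))"
  by (simp add: DD_def)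

lemma space_DD[simp]: "space (DD M s) = streams (dtmc_states M)"
  by (simp add: DD_def space_stream_space)

lemma prob_DD:
  assumes wf: "wf_dtmc AP M" and u: "u \<in> dtmc_states M"
  shows "prob_space (DD M u)"
  unfolding DD_def by (rule prob_space.prob_space_distr[OF prob_Om meas_orb[OF wf u]])

lemma orb_in_S:
  assumes wf: "wf_dtmc AP M" and u: "u \<in> dtmc_states M"
  shows "orb (cl M) u \<omega> \<in> streams (dtmc_states M)"
  by (rule orb_in_streams[OF u cl_in[OF wf]])

lemma K:
  assumes wf: "wf_dtmc AP M" and u: "u \<in> dtmc_states M"
    and B: "B \<in> sets (stream_space (count_space (dtmc_states M)))"
    and B': "B' \<in> sets (stream_space (count_space (dtmc_states M)))"
    and eq: "\<And>\<omega>. \<omega> \<in> streams (dtmc_states M) \<Longrightarrow> (u ## \<omega> \<in> B) = (\<omega> \<in> B')"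
  shows "emeasure (DD M u) B = (\<integral>\<^sup>+f. emeasure (DD M (cl M (f u))) B' \<partial>measure_pmf (FF M))"
proof -
  have X: "orb (cl M) u -` B \<in> sets (Om M)"
    using measurable_sets[OF meas_orb[OF wf u] B] by simp
  have "emeasure (DD M u) B = emeasure (Om M) (orb (cl M) u -` B)"
    unfolding DD_def using B by (subst emeasure_distr[OF meas_orb[OF wf u]]) auto
  also have "\<dots> = (\<integral>\<^sup>+f. emeasure (Om M) {x\<in>space (Om M). f ## x \<in> orb (cl M) u -` B} \<partial>measure_pmf (FF M))"
    using prob_space.emeasure_stream_space[OF prob_space_measure_pmf X[unfolded Om_def]] unfolding Om_def by simp
  also have "\<dots> = (\<integral>\<^sup>+f. emeasure (DD M (cl M (f u))) B' \<partial>measure_pmf (FF M))"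
  proof (rule nn_integral_cong)
    fix f
    have "{x\<in>space (Om M). f ## x \<in> orb (cl M) u -` B} = orb (cl M) (cl M (f u)) -` B'"
      using eq orb_in_S[OF wf cl_in[OF wf]] by (auto simp: orb_Stream)
    also have "emeasure (Om M) \<dots> = emeasure (DD M (cl M (f u))) B'"
      unfolding DD_def using B' by (subst emeasure_distr[OF meas_orb[OF wf cl_in[OF wf]]]) auto
    finally show "emeasure (Om M) {x\<in>space (Om M). f ## x \<in> orb (cl M) u -` B} = emeasure (DD M (cl M (f u))) B'" .
  qed
  finally show ?thesis .
qed

lemma CC_Nil: "CC M x [] = {\<omega> \<in> streams (dtmc_states M). shd \<omega> = x}"
  by (auto simp: CC_def)

lemma CC_Cons: "CC M x (t # ts) = {\<omega> \<in> streams (dtmc_states M). shd \<omega> = x \<and> stl \<omega> \<in> CC M t ts}"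
  by (auto simp: CC_def streams_stl)

lemma sets_shd_eq:
  "{\<omega> \<in> streams S. shd \<omega> = x} \<in> sets (stream_space (count_space S))"
proof -
  have "(\<lambda>y. y = x) \<in> measurable (count_space S) (count_space UNIV)" by simp
  from measurable_compose[OF measurable_shd this]
  have "Measurable.pred (stream_space (count_space S)) (\<lambda>\<omega>. shd \<omega> = x)" by simp
  then show ?thesis by (simp add: pred_def space_stream_space)
qed

lemma sets_CC: "CC M x ts \<in> sets (stream_space (count_space (dtmc_states M)))"
proof (induction ts arbitrary: x)
  case Nil then show ?case by (simp add: CC_Nil sets_shd_eq)
next
  case (Cons t ts)
  have "CC M x (t # ts) = {\<omega> \<in> streams (dtmc_states M). shd \<omega> = x} \<inter>
      (stl -` CC M t ts \<inter> space (stream_space (count_space (dtmc_states M))))"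
    by (auto simp: CC_Cons space_stream_space)
  also have "\<dots> \<in> sets (stream_space (count_space (dtmc_states M)))"
    by (intro sets.Int sets_shd_eq measurable_sets[OF measurable_stl Cons.IH])
  finally show ?case .
qed

lemma path_prob_nonneg: "wf_dtmc AP M \<Longrightarrow> 0 \<le> path_prob M s ts"
  by (induction ts arbitrary: s) (auto simp: wf_dtmc_def)

lemma emeasure_DD_CC:
  assumes wf: "wf_dtmc AP M" and u: "u \<in> dtmc_states M" and ts: "set ts \<subseteq> dtmc_states M"
  shows "emeasure (DD M u) (CC M x ts) = (if x = u then ennreal (path_prob M u ts) else 0)"
  using u ts
proof (induction ts arbitrary: u x)
  case Nil
  have "emeasure (DD M u) (CC M x []) =
     (\<integral>\<^sup>+f. emeasure (DD M (cl M (f u))) (if x = u then streams (dtmc_states M) else {}) \<partial>measure_pmf (FF M))"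
    by (rule K[OF wf Nil(1) sets_CC]) (use streams_stream_space[of "count_space (dtmc_states M)"] in \<open>auto simp: CC_Nil Nil(1)\<close>)
  also have "\<dots> = (\<integral>\<^sup>+f. (if x = u then 1 else 0) \<partial>measure_pmf (FF M))"
  proof (rule nn_integral_cong)
    fix f
    interpret P: prob_space "DD M (cl M (f u))" by (rule prob_DD[OF wf cl_in[OF wf]])
    show "emeasure (DD M (cl M (f u))) (if x = u then streams (dtmc_states M) else {}) = (if x = u then 1 else 0)"
      using P.emeasure_space_1 by simp
  qed
  also have "\<dots> = (if x = u then ennreal (path_prob M u []) else 0)"
    by (simp add: measure_pmf.emeasure_space_1)
  finally show ?case .
next
  case (Cons t ts)
  have t: "t \<in> dtmc_states M" and ts: "set ts \<subseteq> dtmc_states M" using Cons.prems by auto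
  have "emeasure (DD M u) (CC M x (t # ts)) =
     (\<integral>\<^sup>+f. emeasure (DD M (cl M (f u))) (if x = u then CC M t ts else {}) \<partial>measure_pmf (FF M))"
    by (rule K[OF wf Cons.prems(1) sets_CC]) (use Cons.prems(1) in \<open>auto simp: CC_Cons sets_CC\<close>)
  also have "\<dots> = (\<integral>\<^sup>+f. (if x = u then ennreal (path_prob M t ts) else 0) * indicator {f. cl M (f u) = t} f \<partial>measure_pmf (FF M))"
  proof (rule nn_integral_cong)
    fix f
    show "emeasure (DD M (cl M (f u))) (if x = u then CC M t ts else {}) =
      (if x = u then ennreal (path_prob M t ts) else 0) * indicator {f. cl M (f u) = t} f"
      using Cons.IH[OF cl_in[OF wf, of "f u"] ts, of t] by (auto split: split_indicator)
  qed
  also have "\<dots> = (if x = u then ennreal (path_prob M t ts) else 0) * emeasure (measure_pmf (FF M)) {f. cl M (f u) = t}"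
    by (rule nn_integral_cmult_indicator) simp
  also have "\<dots> = (if x = u then ennreal (path_prob M u (t # ts)) else 0)"
    using emeasure_FF[OF wf Cons.prems(1) t] path_prob_nonneg[OF wf, of t ts] wf
    by (auto simp: ennreal_mult' mult.commute wf_dtmc_def)
  finally show ?case .
qed

lemma markov_null:
  assumes wf: "wf_dtmc AP M" and u: "u \<in> dtmc_states M"
    and A: "A \<in> sets (stream_space (count_space (dtmc_states M)))"
    and null: "\<And>t. t \<in> dtmc_states M \<Longrightarrow> emeasure (DD M t) A = 0"
  shows "emeasure (DD M u) {\<omega> \<in> streams (dtmc_states M). stl \<omega> \<in> A} = 0"
proof -
  have B: "{\<omega> \<in> streams (dtmc_states M). stl \<omega> \<in> A} \<in> sets (stream_space (count_space (dtmc_states M)))"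
    using measurable_sets[OF measurable_stl A] by (simp add: space_stream_space vimage_def Int_def conj_commute)
  have "emeasure (DD M u) {\<omega> \<in> streams (dtmc_states M). stl \<omega> \<in> A} =
     (\<integral>\<^sup>+f. emeasure (DD M (cl M (f u))) A \<partial>measure_pmf (FF M))"
    by (rule K[OF wf u B A]) (use u in auto)
  also have "\<dots> = (\<integral>\<^sup>+f. 0 \<partial>measure_pmf (FF M))"
    by (rule nn_integral_cong) (simp add: null cl_in[OF wf])
  finally show ?thesis by simp
qed

definition QQ :: "('s,'p) dtmc \<Rightarrow> 's \<Rightarrow> 's stream measure \<Rightarrow> bool" where
  "QQ M s \<mu> \<longleftrightarrow> sets \<mu> = sets (stream_space (count_space (dtmc_states M))) \<and>
      prob_space \<mu> \<and>
      (\<forall>ts. set ts \<subseteq> dtmc_states M \<longrightarrow>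
         emeasure \<mu> {\<omega> \<in> streams (dtmc_states M). stake (Suc (length ts)) \<omega> = s # ts}
           = ennreal (path_prob M s ts))"

lemma QQ_DD:
  assumes wf: "wf_dtmc AP M" and s: "s \<in> dtmc_states M"
  shows "QQ M s (DD M s)"
  using prob_DD[OF wf s] emeasure_DD_CC[OF wf s] unfolding QQ_def CC_def by auto

lemma QQ_other:
  assumes Q: "QQ M s \<nu>" and y: "y \<noteq> s"
  shows "emeasure \<nu> (CC M y ts) = 0"
proof -
  interpret P: prob_space \<nu> using Q by (simp add: QQ_def)
  have sets: "sets \<nu> = sets (stream_space (count_space (dtmc_states M)))" using Q by (simp add: QQ_def)
  have sp: "space \<nu> = streams (dtmc_states M)"
    using sets_eq_imp_space_eq[OF sets] by (simp add: space_stream_space)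
  have c0: "\<forall>ts. set ts \<subseteq> dtmc_states M \<longrightarrow> emeasure \<nu> (CC M s ts) = ennreal (path_prob M s ts)"
    using Q unfolding QQ_def CC_def by blast
  have c1: "emeasure \<nu> (CC M s []) = 1" using c0 by (drule_tac spec[of _ "[]"]) simp
  have m: "CC M s [] \<in> sets \<nu>" "CC M y ts \<in> sets \<nu>" using sets_CC sets by auto
  have "CC M y ts \<subseteq> space \<nu> - CC M s []" using y by (auto simp: CC_def sp)
  then have "emeasure \<nu> (CC M y ts) \<le> emeasure \<nu> (space \<nu> - CC M s [])"
    by (intro emeasure_mono) (use m in auto)
  also have "\<dots> = 0" using m c1 by (simp add: emeasure_compl P.emeasure_space_1)
  finally show ?thesis by simp
qed

lemma scyl_empty: "{} \<in> set xs \<Longrightarrow> scylinder S xs = {}"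
  by (induction xs) auto

lemma scyl_map: "scylinder (dtmc_states M) (map (\<lambda>x. {x}) (y # ts)) = CC M y ts"
proof (induction ts arbitrary: y)
  case Nil then show ?case by (auto simp: CC_Nil streams_stl)
next
  case (Cons t ts) then show ?case by (auto simp: CC_Cons)
qed

lemma QQ_unique:
  assumes wf: "wf_dtmc AP M" and s: "s \<in> dtmc_states M" and Q1: "QQ M s \<mu>" and Q2: "QQ M s \<nu>"
  shows "\<mu> = \<nu>"
proof -
  let ?S = "dtmc_states M"
  let ?G = "insert {} ((\<lambda>x. {x}) ` ?S)"
  have fin: "finite ?S" using wf by (simp add: wf_dtmc_def)
  have val: "emeasure \<mu> (CC M y ts) = emeasure \<nu> (CC M y ts)" if "set ts \<subseteq> ?S" for y ts
  proof (cases "y = s")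
    case True
    have "\<forall>ts. set ts \<subseteq> ?S \<longrightarrow> emeasure \<mu> (CC M s ts) = ennreal (path_prob M s ts)"
      "\<forall>ts. set ts \<subseteq> ?S \<longrightarrow> emeasure \<nu> (CC M s ts) = ennreal (path_prob M s ts)"
      using Q1 Q2 unfolding QQ_def CC_def by blast+
    then show ?thesis using True that by simp
  next
    case False then show ?thesis using QQ_other[OF Q1 False] QQ_other[OF Q2 False] by simp
  qed
  show ?thesis
  proof (rule stream_space_eq_scylinder[where S="count_space ?S" and G="?G" and C="(\<lambda>x. {x}) ` ?S"])
    show "prob_space \<mu>" "prob_space \<nu>" using Q1 Q2 by (auto simp: QQ_def)
    show "Int_stable ?G" by (auto simp: Int_stable_def)
    show "sets (count_space ?S) = sets (sigma (space (count_space ?S)) ?G)"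
    proof -
      have "sigma_sets ?S ?G = Pow ?S"
      proof
        show "sigma_sets ?S ?G \<subseteq> Pow ?S" using sigma_sets_into_sp[of ?G ?S] by auto
        have "Pow ?S = sigma_sets ?S ((\<lambda>x. {x}) ` ?S)"
          using sigma_sets_singletons[OF countable_finite[OF fin]] by simp
        also have "\<dots> \<subseteq> sigma_sets ?S ?G" by (rule sigma_sets_mono') auto
        finally show "Pow ?S \<subseteq> sigma_sets ?S ?G" .
      qed
      then show ?thesis by (subst sets_measure_of) auto
    qed
    show "countable ((\<lambda>x. {x}) ` ?S)" by (intro countable_image countable_finite fin)
    show "(\<lambda>x. {x}) ` ?S \<subseteq> ?G" by auto
    show "\<Union>((\<lambda>x. {x}) ` ?S) = space (count_space ?S)" by auto
    show "?G \<subseteq> Pow (space (count_space ?S))" by auto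
    show "sets \<mu> = sets (stream_space (count_space ?S))" "sets \<nu> = sets (stream_space (count_space ?S))"
      using Q1 Q2 by (auto simp: QQ_def)
  next
    fix xs assume ne: "xs \<noteq> []" and xs: "xs \<in> lists ?G"
    show "emeasure \<mu> (scylinder (space (count_space ?S)) xs) = emeasure \<nu> (scylinder (space (count_space ?S)) xs)"
    proof (cases "{} \<in> set xs")
      case True then show ?thesis by (simp add: scyl_empty)
    next
      case False
      with xs have "\<forall>z\<in>set xs. \<exists>x. z = {x} \<and> x \<in> ?S" by auto
      then have "\<exists>ys. xs = map (\<lambda>x. {x}) ys \<and> set ys \<subseteq> ?S"
      proof (induction xs)
        case (Cons z zs)
        then obtain ys x where "zs = map (\<lambda>x. {x}) ys" "set ys \<subseteq> ?S" "z = {x}" "x \<in> ?S" by auto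
        then show ?case by (intro exI[of _ "x # ys"]) auto
      qed auto
      then obtain ys where ys: "xs = map (\<lambda>x. {x}) ys" "set ys \<subseteq> ?S" by blast
      with ne obtain y ts where yts: "ys = y # ts" by (cases ys) auto
      then have "xs = map (\<lambda>x. {x}) (y # ts)" using ys by simp
      then have "scylinder (space (count_space ?S)) xs = CC M y ts" by (simp only: space_count_space scyl_map)
      then show ?thesis using val[of ts y] ys yts by simp
    qed
  qed
qed

lemma paths_eq:
  assumes wf: "wf_dtmc AP M" and s: "s \<in> dtmc_states M"
  shows "paths M s = DD M s"
proof -
  have "(THE \<mu>. QQ M s \<mu>) = DD M s"
    by (rule the_equality[where P="QQ M s", OF QQ_DD[OF wf s]]) (rule QQ_unique[OF wf s _ QQ_DD[OF wf s]])
  then show ?thesis unfolding paths_def QQ_def .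
qed

section \<open>Syntactic elimination\<close>
fun elm :: "'p ltl \<Rightarrow> 'p ltl \<Rightarrow> 'p ltl option" where
  "elm \<phi> (Lit p) = (if Lit p = \<phi> then None else Some (Lit p))"
| "elm \<phi> (NLit p) = (if NLit p = \<phi> then None else Some (NLit p))"
| "elm \<phi> (And a b) = (if And a b = \<phi> then None else
     (case elm \<phi> a of None \<Rightarrow> None | Some x \<Rightarrow> (case elm \<phi> b of None \<Rightarrow> None | Some y \<Rightarrow> Some (And x y))))"
| "elm \<phi> (Or a b) = (if Or a b = \<phi> then None else
     (case elm \<phi> a of None \<Rightarrow> elm \<phi> b | Some x \<Rightarrow> (case elm \<phi> b of None \<Rightarrow> Some x | Some y \<Rightarrow> Some (Or x y))))"
| "elm \<phi> (Next a) = (if Next a = \<phi> then None else map_option Next (elm \<phi> a))"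
| "elm \<phi> (Eventually a) = (if Eventually a = \<phi> then None else map_option Eventually (elm \<phi> a))"
| "elm \<phi> (Always a) = (if Always a = \<phi> then None else map_option Always (elm \<phi> a))"
| "elm \<phi> (Until a b) = (if Until a b = \<phi> then None else
     (case elm \<phi> b of None \<Rightarrow> None | Some y \<Rightarrow> (case elm \<phi> a of None \<Rightarrow> Some y | Some x \<Rightarrow> Some (Until x y))))"

lemma elm_mono: "elm \<phi> \<theta> = Some \<theta>' \<Longrightarrow> ltl_sat l w \<theta>' \<Longrightarrow> ltl_sat l w \<theta>"
proof (induction \<theta> arbitrary: \<theta>' w)
  case (Until a b)
  then show ?case
    by (auto split: if_splits option.splits) (metis less_nat_zero_code sdrop.simps(1))+
qed (fastforce split: if_splits option.splits)+

lemma elm_size: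
  "elm \<phi> \<theta> = Some \<theta>' \<Longrightarrow> ltl_size \<theta>' \<le> ltl_size \<theta> \<and> atoms \<theta>' \<subseteq> atoms \<theta> \<and>
     (\<phi> \<in> subformulas \<theta> \<longrightarrow> ltl_size \<theta>' < ltl_size \<theta>)"
proof (induction \<theta> arbitrary: \<theta>')
  case (And a b) then show ?case by (fastforce split: if_splits option.splits)
next
  case (Or a b) then show ?case by (fastforce split: if_splits option.splits)
next
  case (Until a b) then show ?case by (fastforce split: if_splits option.splits)
qed (auto split: if_splits)

lemma elm_self: "elm \<phi> \<phi> = None"
  by (cases \<phi>) auto

definition HH :: "('s \<Rightarrow> 'p set) \<Rightarrow> 'p ltl \<Rightarrow> 's stream \<Rightarrow> bool" where
  "HH l \<phi> w \<longleftrightarrow> (\<forall>i. \<not> ltl_sat l (sdrop i w) \<phi>)"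

lemma HH_sdrop: "HH l \<phi> w \<Longrightarrow> HH l \<phi> (sdrop k w)"
  by (simp add: HH_def)

lemma HH_stl: "HH l \<phi> w \<Longrightarrow> HH l \<phi> (stl w)"
  using HH_sdrop[of l \<phi> w 1] by simp

lemma HH_now: "HH l \<phi> w \<Longrightarrow> \<not> ltl_sat l w \<phi>"
  unfolding HH_def by (metis sdrop.simps(1))

lemma elm_eq:
  "HH l \<phi> w \<Longrightarrow> ltl_sat l w \<theta> = (case elm \<phi> \<theta> of None \<Rightarrow> False | Some \<theta>' \<Rightarrow> ltl_sat l w \<theta>')"
proof (induction \<theta> arbitrary: w)
  case (Lit p)
  show ?case
  proof (cases "Lit p = \<phi>")
    case True then show ?thesis using HH_now[OF Lit.prems] by (simp add: elm_self)
  qed simp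
next
  case (NLit p)
  show ?case
  proof (cases "NLit p = \<phi>")
    case True then show ?thesis using HH_now[OF NLit.prems] by (simp add: elm_self)
  qed simp
next
  case (And a b)
  show ?case
  proof (cases "And a b = \<phi>")
    case True then show ?thesis using HH_now[OF And.prems] by (simp add: elm_self)
  next
    case False
    have IHa: "ltl_sat l w a = (case elm \<phi> a of None \<Rightarrow> False | Some \<theta>' \<Rightarrow> ltl_sat l w \<theta>')"
      by (rule And.IH(1)[OF And.prems])
    have IHb: "ltl_sat l w b = (case elm \<phi> b of None \<Rightarrow> False | Some \<theta>' \<Rightarrow> ltl_sat l w \<theta>')"
      by (rule And.IH(2)[OF And.prems])
    show ?thesis using False IHa IHb by (cases "elm \<phi> a"; cases "elm \<phi> b") simp_all
  qed
next
  case (Or a b)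
  show ?case
  proof (cases "Or a b = \<phi>")
    case True then show ?thesis using HH_now[OF Or.prems] by (simp add: elm_self)
  next
    case False
    have IHa: "ltl_sat l w a = (case elm \<phi> a of None \<Rightarrow> False | Some \<theta>' \<Rightarrow> ltl_sat l w \<theta>')"
      by (rule Or.IH(1)[OF Or.prems])
    have IHb: "ltl_sat l w b = (case elm \<phi> b of None \<Rightarrow> False | Some \<theta>' \<Rightarrow> ltl_sat l w \<theta>')"
      by (rule Or.IH(2)[OF Or.prems])
    show ?thesis using False IHa IHb by (cases "elm \<phi> a"; cases "elm \<phi> b") simp_all
  qed
next
  case (Next a)
  show ?case
  proof (cases "Next a = \<phi>")
    case True then show ?thesis using HH_now[OF Next.prems] by (simp add: elm_self)
  next
    case False
    have IHa: "ltl_sat l (stl w) a = (case elm \<phi> a of None \<Rightarrow> False | Some \<theta>' \<Rightarrow> ltl_sat l (stl w) \<theta>')"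
      by (rule Next.IH[OF HH_stl[OF Next.prems]])
    show ?thesis using False IHa by (cases "elm \<phi> a") simp_all
  qed
next
  case (Eventually a)
  show ?case
  proof (cases "Eventually a = \<phi>")
    case True then show ?thesis using HH_now[OF Eventually.prems] by (simp add: elm_self)
  next
    case False
    have IHa: "ltl_sat l (sdrop k w) a = (case elm \<phi> a of None \<Rightarrow> False | Some \<theta>' \<Rightarrow> ltl_sat l (sdrop k w) \<theta>')" for k
      by (rule Eventually.IH[OF HH_sdrop[OF Eventually.prems]])
    show ?thesis using False IHa by (cases "elm \<phi> a") simp_all
  qed
next
  case (Always a)
  show ?case
  proof (cases "Always a = \<phi>")
    case True then show ?thesis using HH_now[OF Always.prems] by (simp add: elm_self)
  next
    case False
    have IHa: "ltl_sat l (sdrop k w) a = (case elm \<phi> a of None \<Rightarrow> False | Some \<theta>' \<Rightarrow> ltl_sat l (sdrop k w) \<theta>')" for k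
      by (rule Always.IH[OF HH_sdrop[OF Always.prems]])
    have "\<not> ltl_sat l w (Always a)" if "elm \<phi> a = None"
    proof
      assume "ltl_sat l w (Always a)"
      then have "ltl_sat l (sdrop 0 w) a" by (simp only: ltl_sat.simps)
      then show False using IHa[of 0] that by simp
    qed
    then show ?thesis using False IHa by (cases "elm \<phi> a") simp_all
  qed
next
  case (Until a b)
  show ?case
  proof (cases "Until a b = \<phi>")
    case True then show ?thesis using HH_now[OF Until.prems] by (simp add: elm_self)
  next
    case False
    have IHa: "ltl_sat l (sdrop k w) a = (case elm \<phi> a of None \<Rightarrow> False | Some \<theta>' \<Rightarrow> ltl_sat l (sdrop k w) \<theta>')" for k
      by (rule Until.IH(1)[OF HH_sdrop[OF Until.prems]])
    have IHb: "ltl_sat l (sdrop k w) b = (case elm \<phi> b of None \<Rightarrow> False | Some \<theta>' \<Rightarrow> ltl_sat l (sdrop k w) \<theta>')" for k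
      by (rule Until.IH(2)[OF HH_sdrop[OF Until.prems]])
    show ?thesis
    proof (cases "elm \<phi> b")
      case None then show ?thesis using False IHb by simp
    next
      case (Some y)
      show ?thesis
      proof (cases "elm \<phi> a")
        case None
        have "ltl_sat l w (Until a b) \<longleftrightarrow> ltl_sat l w b"
        proof
          assume "ltl_sat l w (Until a b)"
          then obtain i where i: "ltl_sat l (sdrop i w) b" "\<forall>j<i. ltl_sat l (sdrop j w) a" by auto
          have "i = 0"
          proof (rule ccontr)
            assume "i \<noteq> 0"
            then have "ltl_sat l (sdrop 0 w) a" using i(2) by blast
            then show False using IHa[of 0] None by simp
          qed
          then show "ltl_sat l w b" using i(1) by simp
        next
          assume "ltl_sat l w b"
          then show "ltl_sat l w (Until a b)" by (auto intro!: exI[of _ 0])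
        qed
        then show ?thesis using False Some None IHb[of 0] by simp
      next
        case (Some x) then show ?thesis using False \<open>elm \<phi> b = Some y\<close> IHa IHb by simp
      qed
    qed
  qed
qed


lemma sets_ltl:
  "{\<omega> \<in> streams S. ltl_sat l \<omega> \<theta>} \<in> sets (stream_space (count_space S))"
  using measurable_ltl[where S=S and l=l and \<phi>=\<theta>] by (simp add: pred_def space_stream_space)

lemma Pr_DD:
  assumes wf: "wf_dtmc AP M" and s: "s \<in> dtmc_states M"
  shows "Pr M s \<theta> = measure (DD M s) {\<omega> \<in> streams (dtmc_states M). ltl_sat (dtmc_label M) \<omega> \<theta>}"
  by (simp add: Pr_def paths_eq[OF wf s])

lemma null_E:
  assumes wf: "wf_dtmc AP M" and z: "\<forall>t\<in>dtmc_states M. Pr M t \<phi> = 0" and s: "s \<in> dtmc_states M"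
  shows "{\<omega> \<in> streams (dtmc_states M). \<exists>i. ltl_sat (dtmc_label M) (sdrop i \<omega>) \<phi>} \<in> null_sets (DD M s)"
proof -
  let ?S = "dtmc_states M" and ?l = "dtmc_label M"
  define A where "A i = {\<omega> \<in> streams ?S. ltl_sat ?l (sdrop i \<omega>) \<phi>}" for i
  have Asets: "A i \<in> sets (stream_space (count_space ?S))" for i
  proof -
    have "Measurable.pred (stream_space (count_space ?S)) (\<lambda>\<omega>. ltl_sat ?l (sdrop i \<omega>) \<phi>)"
      using measurable_compose[OF measurable_sdrop measurable_ltl[where S="?S" and l="?l" and \<phi>=\<phi>]] by simp
    then show ?thesis by (simp add: pred_def space_stream_space A_def)
  qed
  have "\<forall>t\<in>?S. emeasure (DD M t) (A i) = 0" for i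
  proof (induction i)
    case 0
    show ?case
    proof
      fix t assume t: "t \<in> ?S"
      interpret P: prob_space "DD M t" by (rule prob_DD[OF wf t])
      have "measure (DD M t) (A 0) = 0" using z t Pr_DD[OF wf t, of \<phi>] by (simp add: A_def)
      then show "emeasure (DD M t) (A 0) = 0" by (simp add: P.emeasure_eq_measure)
    qed
  next
    case (Suc i)
    show ?case
    proof
      fix t assume t: "t \<in> ?S"
      have "A (Suc i) = {\<omega> \<in> streams ?S. stl \<omega> \<in> A i}"
        by (auto simp: A_def streams_stl)
      then show "emeasure (DD M t) (A (Suc i)) = 0"
        using markov_null[OF wf t Asets Suc[rule_format]] by simp
    qed
  qed
  then have "emeasure (DD M s) (\<Union>i. A i) = 0"
    using s Asets by (intro emeasure_UN_eq_0) auto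
  moreover have "(\<Union>i. A i) = {\<omega> \<in> streams ?S. \<exists>i. ltl_sat ?l (sdrop i \<omega>) \<phi>}"
    by (auto simp: A_def)
  moreover have "(\<Union>i. A i) \<in> sets (DD M s)" using Asets by auto
  ultimately show ?thesis by auto
qed

theorem lemma3:
  fixes AP :: "'p set" and Pos Neg :: "('s, 'p) dtmc set"
    and \<phi> \<psi> :: "'p ltl" and r :: real
  assumes "sample AP Pos Neg"
    and "Pos \<noteq> {}"
    and "atoms \<phi> \<subseteq> AP"
    and "\<forall>M\<in>Pos. \<forall>s\<in>dtmc_states M. Pr M s \<phi> = 0"
    and "r \<in> {0..1}" and "atoms \<psi> \<subseteq> AP"
    and "consistent Pos Neg r \<psi>"
    and "\<forall>r' \<psi>'. r' \<in> {0..1} \<and> atoms \<psi>' \<subseteq> AP \<and> consistent Pos Neg r' \<psi>'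
           \<longrightarrow> ltl_size \<psi> \<le> ltl_size \<psi>'"
  shows "\<phi> \<notin> subformulas \<psi>"
proof
  assume sub: "\<phi> \<in> subformulas \<psi>"
  have wfP: "wf_dtmc AP M" if "M \<in> Pos" for M using assms(1) that by (simp add: sample_def)
  have wfN: "wf_dtmc AP M" if "M \<in> Neg" for M using assms(1) that by (simp add: sample_def)
  have init: "dtmc_init M \<in> dtmc_states M" if "wf_dtmc AP M" for M using that by (simp add: wf_dtmc_def)
  define E where "E M = {\<omega> \<in> streams (dtmc_states M). \<exists>i. ltl_sat (dtmc_label M) (sdrop i \<omega>) \<phi>}" for M :: "('s,'p) dtmc"
  define Aset where "Aset M \<theta> = {\<omega> \<in> streams (dtmc_states M). ltl_sat (dtmc_label M) \<omega> \<theta>}" for M :: "('s,'p) dtmc" and \<theta>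
  have nullP: "E M \<in> null_sets (DD M (dtmc_init M))" if "M \<in> Pos" for M
    unfolding E_def by (rule null_E[OF wfP[OF that] _ init[OF wfP[OF that]]]) (use assms(4) that in blast)
  have AEP: "AE \<omega> in DD M (dtmc_init M). HH (dtmc_label M) \<phi> \<omega>" if "M \<in> Pos" for M
    by (rule AE_I'[OF nullP[OF that]]) (auto simp: E_def HH_def)
  have PrA: "Pr M (dtmc_init M) \<theta> = measure (DD M (dtmc_init M)) (Aset M \<theta>)" if "wf_dtmc AP M" for M \<theta>
    using Pr_DD[OF that init[OF that]] by (simp add: Aset_def)
  have AsetS: "Aset M \<theta> \<in> sets (DD M s)" for M \<theta> s
    using sets_ltl by (simp add: Aset_def)
  show False
  proof (cases "elm \<phi> \<psi>")
    case None
    obtain M0 where M0: "M0 \<in> Pos" using assms(2) by blast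
    interpret P: prob_space "DD M0 (dtmc_init M0)" by (rule prob_DD[OF wfP[OF M0] init[OF wfP[OF M0]]])
    have "Aset M0 \<psi> \<subseteq> E M0"
    proof
      fix \<omega> assume w: "\<omega> \<in> Aset M0 \<psi>"
      show "\<omega> \<in> E M0"
      proof (rule ccontr)
        assume "\<omega> \<notin> E M0"
        then have "HH (dtmc_label M0) \<phi> \<omega>" using w by (auto simp: E_def Aset_def HH_def)
        from elm_eq[OF this, of \<psi>] None w show False by (simp add: Aset_def)
      qed
    qed
    then have "measure (DD M0 (dtmc_init M0)) (Aset M0 \<psi>) \<le> measure (DD M0 (dtmc_init M0)) (E M0)"
      using nullP[OF M0] by (intro P.finite_measure_mono) auto
    also have "\<dots> = 0" using nullP[OF M0] by (simp add: measure_def null_setsD1)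
    finally have "Pr M0 (dtmc_init M0) \<psi> \<le> 0" using PrA[OF wfP[OF M0]] by simp
    moreover have "Pr M0 (dtmc_init M0) \<psi> > r" using assms(7) M0 by (simp add: consistent_def sat_PLTL_def)
    ultimately show False using assms(5) by simp
  next
    case (Some \<psi>')
    have sz: "ltl_size \<psi>' < ltl_size \<psi>" and at: "atoms \<psi>' \<subseteq> atoms \<psi>"
      using elm_size[OF Some] sub by auto
    have "consistent Pos Neg r \<psi>'"
      unfolding consistent_def
    proof (intro conjI ballI)
      fix M assume M: "M \<in> Pos"
      have "AE \<omega> in DD M (dtmc_init M). \<omega> \<in> Aset M \<psi>' \<longleftrightarrow> \<omega> \<in> Aset M \<psi>"
        using AEP[OF M]
      proof (rule eventually_mono)
        fix \<omega> assume "HH (dtmc_label M) \<phi> \<omega>"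
        from elm_eq[OF this, of \<psi>] Some show "\<omega> \<in> Aset M \<psi>' \<longleftrightarrow> \<omega> \<in> Aset M \<psi>"
          by (simp add: Aset_def)
      qed
      then have "measure (DD M (dtmc_init M)) (Aset M \<psi>') = measure (DD M (dtmc_init M)) (Aset M \<psi>)"
        by (rule measure_eq_AE) (simp_all add: Aset_def sets_ltl)
      moreover have "r < Pr M (dtmc_init M) \<psi>" using assms(7) M by (simp add: consistent_def sat_PLTL_def)
      ultimately show "sat_PLTL M r \<psi>'"
        using PrA[OF wfP[OF M]] by (simp add: sat_PLTL_def)
    next
      fix M assume M: "M \<in> Neg"
      interpret P: prob_space "DD M (dtmc_init M)" by (rule prob_DD[OF wfN[OF M] init[OF wfN[OF M]]])
      have "Aset M \<psi>' \<subseteq> Aset M \<psi>" using elm_mono[OF Some] by (auto simp: Aset_def)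
      then have "measure (DD M (dtmc_init M)) (Aset M \<psi>') \<le> measure (DD M (dtmc_init M)) (Aset M \<psi>)"
        by (intro P.finite_measure_mono AsetS)
      then show "\<not> sat_PLTL M r \<psi>'"
        using assms(7) M PrA[OF wfN[OF M]] by (auto simp: consistent_def sat_PLTL_def)
    qed
    then have "ltl_size \<psi> \<le> ltl_size \<psi>'" using assms(5,6,8) at by blast
    with sz show False by simp
  qed
qed

end
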